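(* Let $d\ge1$ and let $f:\mathbb{R}^d\to\mathbb{R}$ be a separately convex function. Then $$D^+_vf(x)\ge -D^+_{-v}f(x)$$ for every direction $v\in S^{d-1}$ and every $x\in\mathbb{R}^d$.
   Context: A function $f:\mathbb{R}^d\to\mathbb{R}$ is called separately convex if it is convex on every line parallel to a coordinate axis. For $v\in S^{d-1}$ (the unit sphere of $\mathbb{R}^d$), $D^+_vf(x)=\limsup_{t\to0+}\frac{f(x+tv)-f(x)}{t}$ denotes the upper one-sided derivative of $f$ at $x$ in direction $v$. *)

theory Defs
  imports "HOL-Analysis.Analysis" "HOL-Library.Extended_Real"
begin

definition separately_convex :: "(real^'n \<Rightarrow> real) \<Rightarrow> bool" where
  "separately_convex f \<longleftrightarrow>
     (\<forall>x i. convex_on UNIV (\<lambda>t::real. f (x + t *\<^sub>R axis i 1)))"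

definition upper_dir_deriv :: "(real^'n \<Rightarrow> real) \<Rightarrow> real^'n \<Rightarrow> real^'n \<Rightarrow> ereal" where
  "upper_dir_deriv f x v =
     Limsup (at_right 0) (\<lambda>t::real. ereal ((f (x + t *\<^sub>R v) - f x) / t))"

end

theory Submission
  imports Defs
begin


lemma cvx3:
  fixes \<phi> :: "real \<Rightarrow> real"
  assumes cv: "convex_on UNIV \<phi>" and ab: "a < b" and "a \<le> c" and "c \<le> b"
  shows "(b - a) * \<phi> c \<le> (b - c) * \<phi> a + (c - a) * \<phi> b"
proof -
  define t where "t = (c - a) / (b - a)"
  have t0: "0 \<le> t" and t1: "t \<le> 1" using assms by (auto simp: t_def field_simps)
  have "\<phi> ((1 - t) *\<^sub>R a + t *\<^sub>R b) \<le> (1 - t) * \<phi> a + t * \<phi> b"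
    using convex_onD[OF cv t0 t1] by simp
  moreover have "(1 - t) *\<^sub>R a + t *\<^sub>R b = c"
  proof -
    have "(1 - t) *\<^sub>R a + t *\<^sub>R b = a + t * (b - a)" by (simp add: algebra_simps)
    also have "t * (b - a) = c - a" using ab by (simp add: t_def)
    finally show ?thesis by simp
  qed
  ultimately have "\<phi> c \<le> (1 - t) * \<phi> a + t * \<phi> b" by simp
  hence "(b - a) * \<phi> c \<le> (b - a) * ((1 - t) * \<phi> a + t * \<phi> b)"
    using ab by (intro mult_left_mono) auto
  also have "\<dots> = ((b - a) * (1 - t)) * \<phi> a + ((b - a) * t) * \<phi> b" by (simp add: algebra_simps)
  also have "(b - a) * (1 - t) = b - c" using ab by (simp add: t_def field_simps)
  also have "(b - a) * t = c - a" using ab by (simp add: t_def)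
  finally show ?thesis .
qed

lemma line_cvx:
  assumes "separately_convex f"
  shows "convex_on UNIV (\<lambda>t. f (z + t *\<^sub>R axis i 1))"
  using assms by (simp add: separately_convex_def)

lemma wsplit:
  fixes D P a Q Y :: real
  assumes "D > 0" "P + Q = D"
  shows "(P * a + Q * Y) / D = (1 - Q / D) * a + Q / D * Y"
proof -
  have "1 - Q / D = P / D" using assms by (simp add: field_simps)
  thus ?thesis by (simp add: add_divide_distrib)
qed

lemma alg:
  fixes h X XN B c a b dp dm s sX gp gm \<gamma> M K :: real
  assumes h: "h > 0" and X: "0 < X" and XN: "XN = B * X" and B2: "B \<ge> 2"
    and c: "\<bar>c\<bar> \<le> h" and hX: "h \<le> X / 2"
    and ab: "a + b \<le> -2 * \<gamma> * h" and aM: "\<bar>a\<bar> \<le> M * h" and bM: "\<bar>b\<bar> \<le> M * h"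
    and dp: "\<bar>dp\<bar> \<le> M * h" and dm: "\<bar>dm\<bar> \<le> M * h" and s: "\<bar>s\<bar> \<le> M"
    and ssX: "s - sX \<le> 2 * M / K"
    and gp: "(XN - c) * gp \<le> (XN - X) * a + (X - c) * (XN * s + dp)"
    and gm: "(XN + c) * gm \<le> (XN - X) * b + (X + c) * (XN * s + dm)"
    and BM: "20 * M \<le> B * \<gamma>" and g: "\<gamma> > 0" and M: "M > 0" and K: "K > 0"
    and hK: "8 * M * X / (K * \<gamma>) \<le> h"
  shows "gp + gm - 2 * (X * sX) \<le> - \<gamma> * h"
proof -
  have cX: "\<bar>c\<bar> \<le> X / 2" using c hX by linarith
  have BX: "2 * X \<le> XN" using XN B2 X by (simp add: mult_right_mono)
  have p1: "XN - c > 0" "XN + c > 0" "X - c > 0" "X + c > 0" using cX BX X by auto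
  define bp where "bp = (X - c) / (XN - c)"
  define bm where "bm = (X + c) / (XN + c)"
  have gp': "gp \<le> (1 - bp) * a + bp * (XN * s + dp)"
  proof -
    have "gp \<le> ((XN - X) * a + (X - c) * (XN * s + dp)) / (XN - c)"
      using gp p1 by (simp add: pos_le_divide_eq mult.commute)
    also have "\<dots> = (1 - bp) * a + bp * (XN * s + dp)" using wsplit[where D="XN - c" and P="XN - X" and a=a and Q="X - c" and Y="XN * s + dp"] p1 by (simp add: bp_def)
    finally show ?thesis .
  qed
  have gm': "gm \<le> (1 - bm) * b + bm * (XN * s + dm)"
  proof -
    have "gm \<le> ((XN - X) * b + (X + c) * (XN * s + dm)) / (XN + c)"
      using gm p1 by (simp add: pos_le_divide_eq mult.commute)
    also have "\<dots> = (1 - bm) * b + bm * (XN * s + dm)" using wsplit[where D="XN + c" and P="XN - X" and a=b and Q="X + c" and Y="XN * s + dm"] p1 by (simp add: bm_def)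
    finally show ?thesis .
  qed
  have Bpos: "B > 0" using B2 by simp
  have bp0: "bp \<ge> 0" and bm0: "bm \<ge> 0" using p1 by (auto simp: bp_def bm_def)
  have bp2: "bp \<le> 2 / B"
  proof -
    have "B * (X - c) \<le> 2 * (XN - c)"
    proof -
      have "(B - 2) * (- c) \<le> (B - 2) * (X / 2)" using cX B2 by (intro mult_left_mono) auto
      hence "2 * c - B * c \<le> B * X / 2 - X" by (simp add: algebra_simps)
      moreover have "B * X > 0" using X Bpos by simp
      ultimately show ?thesis using X by (simp add: XN algebra_simps)
    qed
    thus ?thesis using p1 Bpos by (simp add: bp_def divide_le_eq field_simps)
  qed
  have bm2: "bm \<le> 2 / B"
  proof -
    have "B * (X + c) \<le> 2 * (XN + c)"
    proof -
      have "(B - 2) * c \<le> (B - 2) * (X / 2)" using cX B2 by (intro mult_left_mono) auto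
      hence "B * c - 2 * c \<le> B * X / 2 - X" by (simp add: algebra_simps)
      moreover have "B * X > 0" using X Bpos by simp
      ultimately show ?thesis using X by (simp add: XN algebra_simps)
    qed
    thus ?thesis using p1 Bpos by (simp add: bm_def divide_le_eq field_simps)
  qed
  have e1: "\<bar>bp * a\<bar> \<le> 2 / B * (M * h)"
    unfolding abs_mult using bp0 bp2 aM Bpos by (intro mult_mono) auto
  have e2: "\<bar>bm * b\<bar> \<le> 2 / B * (M * h)"
    unfolding abs_mult using bm0 bm2 bM Bpos by (intro mult_mono) auto
  have e3: "\<bar>bp * dp\<bar> \<le> 2 / B * (M * h)"
    unfolding abs_mult using bp0 bp2 dp Bpos by (intro mult_mono) auto
  have e4: "\<bar>bm * dm\<bar> \<le> 2 / B * (M * h)"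
    unfolding abs_mult using bm0 bm2 dm Bpos by (intro mult_mono) auto
  have iden: "(bp + bm) * XN - 2 * X = - 2 * c^2 * (XN - X) / (XN^2 - c^2)"
  proof -
    have e: "XN * XN - c * c = (XN - c) * (XN + c)" by (simp add: algebra_simps)
    have nz: "XN * XN - c * c \<noteq> 0" unfolding e using p1 by simp
    show ?thesis using p1 nz by (simp add: bp_def bm_def power2_eq_square field_simps)
  qed
  have e5: "\<bar>(bp + bm) * XN - 2 * X\<bar> \<le> 2 * h / B"
  proof -
    have c2: "c^2 \<le> h * (X / 2)" using c hX h by (metis abs_ge_zero mult_mono power2_abs power2_eq_square order_trans)
    have d1: "XN^2 - c^2 \<ge> XN^2 / 2"
    proof -
      have "c^2 \<le> (X/2)^2" using cX by (metis abs_ge_zero power2_abs power_mono)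
      moreover have "(X/2)^2 \<le> XN^2 / 2" proof -
        have "X * X \<le> XN * XN" using BX X by (intro mult_mono) auto
        moreover have "XN * XN \<ge> 0" by simp
        moreover have "(X/2)^2 = X * X / 4" "XN^2 = XN * XN" by (simp_all add: power2_eq_square)
        ultimately show ?thesis by linarith
      qed
      ultimately show ?thesis by simp
    qed
    have XNpos: "XN > 0" using BX X by simp
    have "\<bar>(bp + bm) * XN - 2 * X\<bar> = 2 * c^2 * (XN - X) / (XN^2 - c^2)"
      using iden BX X d1 XNpos by (simp add: abs_div) (smt (verit) divide_nonneg_pos zero_le_power2 mult_nonneg_nonneg)
    also have "\<dots> \<le> 2 * (h * (X/2)) * XN / (XN^2 / 2)"
    proof (rule frac_le)
      show "0 \<le> 2 * (h * (X / 2)) * XN" using h X XNpos by simp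
      show "2 * c\<^sup>2 * (XN - X) \<le> 2 * (h * (X / 2)) * XN"
        using c2 X XNpos h BX by (intro mult_mono) auto
      show "0 < XN^2 / 2" using XNpos by simp
      show "XN^2 / 2 \<le> XN^2 - c^2" using d1 .
    qed
    also have "\<dots> = 2 * h * X / XN" using XNpos by (simp add: field_simps power2_eq_square)
    also have "\<dots> = 2 * h / B" using XN X Bpos by simp
    finally show ?thesis .
  qed
  have e6: "\<bar>((bp + bm) * XN - 2 * X) * s\<bar> \<le> 2 * h / B * M"
    unfolding abs_mult using e5 s by (intro mult_mono) auto
  have e7: "2 * X * (s - sX) \<le> \<gamma> * h / 2"
  proof -
    have "2 * X * (s - sX) \<le> 2 * X * (2 * M / K)" using ssX X by (intro mult_left_mono) auto
    also have "\<dots> = (8 * M * X / (K * \<gamma>)) * \<gamma> / 2" using g K by (simp add: field_simps)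
    also have "\<dots> \<le> h * \<gamma> / 2"
    proof -
      have "(8 * M * X / (K * \<gamma>)) * \<gamma> \<le> h * \<gamma>" using hK g by (intro mult_right_mono) auto
      thus ?thesis by (intro divide_right_mono) auto
    qed
    finally show ?thesis by (simp add: mult.commute)
  qed
  have e8: "10 * M * h / B \<le> \<gamma> * h / 2"
  proof -
    have "10 * M * h / B \<le> (B * \<gamma> / 2) * h / B" using BM h Bpos by (intro divide_right_mono mult_right_mono) auto
    also have "\<dots> = \<gamma> * h / 2" using Bpos by simp
    finally show ?thesis .
  qed
  have "gp + gm - 2 * (X * sX) \<le> (a + b) - bp * a - bm * b + bp * dp + bm * dm
        + ((bp + bm) * XN - 2 * X) * s + 2 * X * (s - sX)"
    using gp' gm' by (simp add: algebra_simps)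
  also have "\<dots> \<le> -2 * \<gamma> * h + 4 * (2 / B * (M * h)) + 2 * h / B * M + \<gamma> * h / 2"
    using ab e1 e2 e3 e4 e6 e7 unfolding abs_le_iff by linarith
  also have "\<dots> = -2 * \<gamma> * h + 10 * M * h / B + \<gamma> * h / 2" by (simp add: field_simps)
  also have "\<dots> \<le> - \<gamma> * h" using e8 by simp
  finally show ?thesis .
qed



lemma aff:
  fixes A B C u v w z :: real
  assumes "(B - A) * u \<le> (B - C) * v + (C - A) * w"
  shows "(B - A) * (u - z) \<le> (B - C) * (v - z) + (C - A) * (w - z)"
  using assms by (simp add: algebra_simps)

lemma card_supp_remove:
  fixes w :: "real^'n"
  assumes "w $ i \<noteq> 0"
  shows "card {j. (w - (w$i) *\<^sub>R axis i 1) $ j \<noteq> 0} = card {j. w $ j \<noteq> 0} - 1"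
proof -
  have "{j. (w - (w$i) *\<^sub>R axis i 1) $ j \<noteq> 0} = {j. w $ j \<noteq> 0} - {i}"
    by (auto simp: axis_def)
  thus ?thesis using assms by (simp add: card_Diff_singleton)
qed

lemma norm_remove_le:
  fixes w :: "real^'n"
  shows "norm (w - (w$i) *\<^sub>R axis i 1) \<le> norm w"
  by (rule norm_le_componentwise_cart) (auto simp: axis_def)

definition kinkP :: "(real^'n \<Rightarrow> real) \<Rightarrow> (real^'n) set \<Rightarrow> nat \<Rightarrow> real \<Rightarrow> real \<Rightarrow> bool" where
  "kinkP f U k \<gamma> R \<longleftrightarrow> (\<forall>w p \<rho>1 \<rho>2. card {i. w$i \<noteq> 0} \<le> k \<longrightarrow> norm w \<le> 1 \<longrightarrow> 0 < \<rho>1 \<longrightarrow>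
      R * \<rho>1 \<le> \<rho>2 \<longrightarrow> cball p (2 * \<rho>2) \<subseteq> U \<longrightarrow>
      (\<forall>h. \<rho>1 \<le> h \<and> h \<le> \<rho>2 \<longrightarrow> f (p + h *\<^sub>R w) + f (p - h *\<^sub>R w) - 2 * f p \<le> -2 * \<gamma> * h) \<longrightarrow> False)"

lemma kink_zero:
  fixes w :: "real^'n"
  assumes "w = 0" "0 < \<rho>1" "\<rho>1 \<le> \<rho>2" "\<gamma> > 0"
    and "\<forall>h. \<rho>1 \<le> h \<and> h \<le> \<rho>2 \<longrightarrow> f (p + h *\<^sub>R w) + f (p - h *\<^sub>R w) - 2 * f p \<le> -2 * \<gamma> * h"
  shows False
proof -
  have "f p + f p - 2 * f p \<le> -2 * \<gamma> * \<rho>1" using assms(5)[rule_format, of \<rho>1] assms by simp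
  moreover have "\<gamma> * \<rho>1 > 0" using assms(2,4) by simp
  ultimately show False by linarith
qed

lemma kink_main:
  fixes f :: "real^'n \<Rightarrow> real"
  assumes sc: "separately_convex f" and M: "M > 0"
    and lip: "\<And>y y'. y \<in> U \<Longrightarrow> y' \<in> U \<Longrightarrow> \<bar>f y - f y'\<bar> \<le> M * norm (y - y')"
  shows "\<forall>\<gamma>>0. \<exists>R\<ge>1. kinkP f U k \<gamma> R"
proof (induction k)
  case 0
  show ?case
  proof (intro allI impI exI conjI)
    fix \<gamma> :: real assume g: "\<gamma> > 0"
    show "(1::real) \<ge> 1" by simp
    show "kinkP f U 0 \<gamma> 1"
      unfolding kinkP_def
    proof (intro allI impI)
      fix w :: "real^'n" and p \<rho>1 \<rho>2
      assume c: "card {i. w$i \<noteq> 0} \<le> 0" and r1: "0 < \<rho>1" and r2: "1 * \<rho>1 \<le> \<rho>2"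
        and k: "\<forall>h. \<rho>1 \<le> h \<and> h \<le> \<rho>2 \<longrightarrow> f (p + h *\<^sub>R w) + f (p - h *\<^sub>R w) - 2 * f p \<le> -2 * \<gamma> * h"
      have "{i. w$i \<noteq> 0} = {}" using c by simp
      hence "w = 0" by (auto simp: vec_eq_iff)
      thus False using kink_zero[OF _ r1 _ g k] r2 by simp
    qed
  qed
next
  case (Suc k)
  show ?case
  proof (intro allI impI)
    fix \<gamma> :: real assume g: "\<gamma> > 0"
    obtain R' where R'1: "R' \<ge> 1" and R': "kinkP f U k (\<gamma>/2) R'"
      using Suc.IH g by (meson half_gt_zero)
    define B where "B = 20 * M / \<gamma> + 2"
    define Kn where "Kn = nat \<lceil>16 * M * R' / \<gamma>\<rceil> + 1"
    define K where "K = real Kn"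
    define R where "R = max 1 (K * \<gamma> * B ^ Kn / (8 * M))"
    have B2: "B \<ge> 2" using M g by (simp add: B_def)
    have BM: "20 * M \<le> B * \<gamma>" using g by (simp add: B_def field_simps)
    have Kpos: "K > 0" and Kn0: "Kn > 0" by (simp_all add: K_def Kn_def)
    have KR: "16 * M * R' \<le> K * \<gamma>"
    proof -
      have "16 * M * R' / \<gamma> \<le> K" unfolding K_def Kn_def
        by (smt (verit, best) of_nat_1 of_nat_add of_int_nonneg real_nat_ceiling_ge)
      thus ?thesis using g by (simp add: field_simps)
    qed
    show "\<exists>R\<ge>1. kinkP f U (Suc k) \<gamma> R"
    proof (intro exI conjI)
      show "R \<ge> 1" by (simp add: R_def)
      show "kinkP f U (Suc k) \<gamma> R"
        unfolding kinkP_def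
      proof (intro allI impI)
        fix w :: "real^'n" and p \<rho>1 \<rho>2
        assume cw: "card {i. w$i \<noteq> 0} \<le> Suc k" and nw: "norm w \<le> 1" and r1: "0 < \<rho>1"
          and r2: "R * \<rho>1 \<le> \<rho>2" and sub: "cball p (2 * \<rho>2) \<subseteq> U"
          and kk: "\<forall>h. \<rho>1 \<le> h \<and> h \<le> \<rho>2 \<longrightarrow> f (p + h *\<^sub>R w) + f (p - h *\<^sub>R w) - 2 * f p \<le> -2 * \<gamma> * h"
        have "1 * \<rho>1 \<le> R * \<rho>1" using r1 by (intro mult_right_mono) (auto simp: R_def)
        hence r12: "\<rho>1 \<le> \<rho>2" using r2 by simp
        show False
        proof (cases "w = 0")
          case True
          thus False using kink_zero[OF _ r1 r12 g kk] by simp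
        next
          case False
          then obtain i where wi: "w $ i \<noteq> 0" by (auto simp: vec_eq_iff)
          define e where "e = (axis i 1 :: real^'n)"
          define w' where "w' = w - (w$i) *\<^sub>R e"
          have cw': "card {j. w'$j \<noteq> 0} \<le> k"
            using card_supp_remove[OF wi] cw by (simp add: w'_def e_def)
          have nw': "norm w' \<le> 1" using norm_remove_le[of w i] nw by (simp add: w'_def e_def)
          have ne: "norm e = 1" by (simp add: e_def)
          have wi1: "\<bar>w $ i\<bar> \<le> 1" using component_le_norm_cart[of w i] nw by simp
          have pU: "p \<in> U" using sub r1 r12 by auto
          define \<sigma> where "\<sigma> t = (f (p + t *\<^sub>R e) - f p) / t" for t
          have \<sigma>b: "\<bar>\<sigma> t\<bar> \<le> M" if "0 < t" "t \<le> 2 * \<rho>2" for t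
          proof -
            have "p + t *\<^sub>R e \<in> U" using sub that ne by (auto simp: dist_norm)
            hence "\<bar>f (p + t *\<^sub>R e) - f p\<bar> \<le> M * norm (t *\<^sub>R e)" using lip pU by (metis add_diff_cancel_left')
            hence "\<bar>f (p + t *\<^sub>R e) - f p\<bar> \<le> M * t" using ne that by simp
            thus ?thesis using that by (simp add: \<sigma>_def abs_div divide_le_eq)
          qed
          define X0 where "X0 = \<rho>1 * K * \<gamma> / (8 * M)"
          define Xs where "Xs j = X0 * B ^ j" for j
          have X0pos: "X0 > 0" using r1 Kpos g M by (simp add: X0_def)
          have Xspos: "Xs j > 0" for j using X0pos B2 by (simp add: Xs_def)
          have XK: "Xs Kn \<le> \<rho>2"
          proof -
            have "Xs Kn = (K * \<gamma> * B ^ Kn / (8 * M)) * \<rho>1" by (simp add: Xs_def X0_def field_simps)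
            also have "\<dots> \<le> R * \<rho>1" using r1 by (intro mult_right_mono) (auto simp: R_def)
            finally show ?thesis using r2 by simp
          qed
          have Xmono: "Xs j \<le> Xs Kn" if "j \<le> Kn" for j
            using that B2 X0pos by (simp add: Xs_def power_increasing)
          have "\<exists>j<Kn. \<sigma> (Xs (Suc j)) - \<sigma> (Xs j) \<le> 2 * M / K"
          proof (rule ccontr)
            assume "\<not> ?thesis"
            hence big: "\<And>j. j < Kn \<Longrightarrow> 2 * M / K < \<sigma> (Xs (Suc j)) - \<sigma> (Xs j)" by (meson not_le)
            have "(\<Sum>j<Kn. 2 * M / K) < (\<Sum>j<Kn. \<sigma> (Xs (Suc j)) - \<sigma> (Xs j))"
              using Kn0 big by (intro sum_strict_mono) auto
            also have "\<dots> = \<sigma> (Xs Kn) - \<sigma> (Xs 0)" by (rule sum_lessThan_telescope)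
            also have "\<dots> \<le> 2 * M"
            proof -
              have a1: "Xs Kn \<le> 2 * \<rho>2" "Xs 0 \<le> 2 * \<rho>2" using XK Xmono[of 0] r1 r12 by auto
              have "\<bar>\<sigma> (Xs Kn)\<bar> \<le> M" "\<bar>\<sigma> (Xs 0)\<bar> \<le> M" using \<sigma>b Xspos a1 by auto
              thus ?thesis unfolding abs_le_iff by linarith
            qed
            finally show False using Kpos by (simp add: K_def)
          qed
          then obtain j where jK: "j < Kn" and pig: "\<sigma> (Xs (Suc j)) - \<sigma> (Xs j) \<le> 2 * M / K" by blast
          define X where "X = Xs j"
          define XN where "XN = Xs (Suc j)"
          have Xpos: "X > 0" by (simp add: X_def Xspos)
          have XNeq: "XN = B * X" by (simp add: X_def XN_def Xs_def)
          have XNle: "XN \<le> \<rho>2" using Xmono[of "Suc j"] jK XK by (simp add: XN_def)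
          have XNpos: "XN > 0" by (simp add: XN_def Xspos)
          have XleXN: "X \<le> XN" using XNeq B2 Xpos by simp
          define p' where "p' = p + X *\<^sub>R e"
          define \<rho>1' where "\<rho>1' = 8 * M * X / (K * \<gamma>)"
          define \<rho>2' where "\<rho>2' = X / 2"
          have r1'eq: "\<rho>1' = \<rho>1 * B ^ j" using Kpos g M by (simp add: \<rho>1'_def X_def Xs_def X0_def field_simps)
          have r1'ge: "\<rho>1 \<le> \<rho>1'" unfolding r1'eq using r1 B2 by (simp add: one_le_power)
          have r1'pos: "0 < \<rho>1'" using r1 r1'ge by simp
          have r12': "R' * \<rho>1' \<le> \<rho>2'"
          proof -
            have "R' * \<rho>1' = (16 * M * R') * X / (2 * (K * \<gamma>))" by (simp add: \<rho>1'_def field_simps)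
            also have "\<dots> \<le> (K * \<gamma>) * X / (2 * (K * \<gamma>))"
              using KR Xpos Kpos g by (intro divide_right_mono mult_right_mono) auto
            also have "\<dots> = \<rho>2'" using Kpos g by (simp add: \<rho>2'_def)
            finally show ?thesis .
          qed
          have sub': "cball p' (2 * \<rho>2') \<subseteq> U"
          proof
            fix y assume "y \<in> cball p' (2 * \<rho>2')"
            hence "dist p' y \<le> X" by (simp add: \<rho>2'_def)
            moreover have "dist p p' = X" using Xpos ne by (simp add: p'_def dist_norm)
            ultimately have "dist p y \<le> 2 * \<rho>2" using dist_triangle[of p y p'] XleXN XNle by linarith
            thus "y \<in> U" using sub by auto
          qed
          have kk': "\<forall>h. \<rho>1' \<le> h \<and> h \<le> \<rho>2' \<longrightarrow> f (p' + h *\<^sub>R w') + f (p' - h *\<^sub>R w') - 2 * f p' \<le> -2 * (\<gamma>/2) * h"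
          proof (intro allI impI)
            fix h assume hh: "\<rho>1' \<le> h \<and> h \<le> \<rho>2'"
            show "f (p' + h *\<^sub>R w') + f (p' - h *\<^sub>R w') - 2 * f p' \<le> -2 * (\<gamma>/2) * h"
            proof -
              have hpos: "h > 0" using hh r1'pos by linarith
              have hr1: "\<rho>1 \<le> h" using hh r1'ge by linarith
              have hX2: "h \<le> X / 2" using hh by (simp add: \<rho>2'_def)
              have hr2: "h \<le> \<rho>2" using hX2 Xpos XleXN XNle by linarith
              have k0: "f (p + h *\<^sub>R w) + f (p - h *\<^sub>R w) - 2 * f p \<le> -2 * \<gamma> * h"
                using kk hr1 hr2 by blast
              define c where "c = h * w $ i"
              have cb: "\<bar>c\<bar> \<le> h" unfolding c_def abs_mult using wi1 hpos
                using mult_left_le[of "\<bar>w $ i\<bar>" h] by simp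
              define q where "q = p + XN *\<^sub>R e"
              have cX: "c < X" using cb hX2 Xpos by linarith
              have cvp: "(XN - c) * f (p' + h *\<^sub>R w') \<le> (XN - X) * f (p + h *\<^sub>R w) + (X - c) * f (q + h *\<^sub>R w')"
              proof -
                have "(XN - c) * f ((p + h *\<^sub>R w') + X *\<^sub>R axis i 1) \<le>
                   (XN - X) * f ((p + h *\<^sub>R w') + c *\<^sub>R axis i 1) + (X - c) * f ((p + h *\<^sub>R w') + XN *\<^sub>R axis i 1)"
                  using cvx3[OF line_cvx[OF sc, of "p + h *\<^sub>R w'" i], of c XN X] cX XleXN by simp
                moreover have i1: "(p + h *\<^sub>R w') + X *\<^sub>R axis i 1 = p' + h *\<^sub>R w'" by (simp add: p'_def e_def algebra_simps)
                moreover have i2: "(p + h *\<^sub>R w') + c *\<^sub>R axis i 1 = p + h *\<^sub>R w" by (simp add: w'_def e_def c_def algebra_simps)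
                moreover have i3: "(p + h *\<^sub>R w') + XN *\<^sub>R axis i 1 = q + h *\<^sub>R w'" by (simp add: q_def e_def algebra_simps)
                ultimately show ?thesis by (simp only: i1 i2 i3)
              qed
              have cvm: "(XN - (-c)) * f (p' - h *\<^sub>R w') \<le> (XN - X) * f (p - h *\<^sub>R w) + (X - (-c)) * f (q - h *\<^sub>R w')"
              proof -
                have cX': "-c < X" using cb hX2 Xpos by linarith
                have "(XN - (-c)) * f ((p - h *\<^sub>R w') + X *\<^sub>R axis i 1) \<le>
                   (XN - X) * f ((p - h *\<^sub>R w') + (-c) *\<^sub>R axis i 1) + (X - (-c)) * f ((p - h *\<^sub>R w') + XN *\<^sub>R axis i 1)"
                  using cvx3[OF line_cvx[OF sc, of "p - h *\<^sub>R w'" i], of "-c" XN X] cX' XleXN by simp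
                moreover have i1: "(p - h *\<^sub>R w') + X *\<^sub>R axis i 1 = p' - h *\<^sub>R w'" by (simp add: p'_def e_def algebra_simps)
                moreover have i2: "(p - h *\<^sub>R w') + (-c) *\<^sub>R axis i 1 = p - h *\<^sub>R w" by (simp add: w'_def e_def c_def algebra_simps)
                moreover have i3: "(p - h *\<^sub>R w') + XN *\<^sub>R axis i 1 = q - h *\<^sub>R w'" by (simp add: q_def e_def algebra_simps)
                ultimately show ?thesis by (simp only: i1 i2 i3)
              qed
              have inU: "y \<in> U" if "dist p y \<le> 2 * \<rho>2" for y using sub that by auto
              have nhw: "norm (h *\<^sub>R w) \<le> h" using nw hpos by (simp add: mult_left_le)
              have nhw': "norm (h *\<^sub>R w') \<le> h" using nw' hpos by (simp add: mult_left_le)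
              have nq: "norm (q - p) = XN" using XNpos ne by (simp add: q_def)
              have qU: "q \<in> U" using inU[of q] nq XNle XNpos by (simp add: dist_norm norm_minus_commute)
              have qpU: "q + h *\<^sub>R w' \<in> U" "q - h *\<^sub>R w' \<in> U"
              proof -
                have "norm (q + h *\<^sub>R w' - p) \<le> norm (q - p) + norm (h *\<^sub>R w')"
                  using norm_triangle_ineq[of "q - p" "h *\<^sub>R w'"] by (simp add: algebra_simps)
                hence "dist p (q + h *\<^sub>R w') \<le> 2 * \<rho>2" using nq nhw' XNle hr2 by (simp add: dist_norm norm_minus_commute)
                thus "q + h *\<^sub>R w' \<in> U" using inU by blast
                have "norm (q - h *\<^sub>R w' - p) \<le> norm (q - p) + norm (h *\<^sub>R w')"
                  using norm_triangle_ineq4[of "q - p" "h *\<^sub>R w'"] by (simp add: algebra_simps)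
                hence "dist p (q - h *\<^sub>R w') \<le> 2 * \<rho>2" using nq nhw' XNle hr2 by (simp add: dist_norm norm_minus_commute)
                thus "q - h *\<^sub>R w' \<in> U" using inU by blast
              qed
              have ppU: "p + h *\<^sub>R w \<in> U" "p - h *\<^sub>R w \<in> U"
              proof -
                have "dist p (p + h *\<^sub>R w) \<le> 2 * \<rho>2" "dist p (p - h *\<^sub>R w) \<le> 2 * \<rho>2"
                  using nhw hr2 r1 r12 by (simp_all add: dist_norm)
                thus "p + h *\<^sub>R w \<in> U" "p - h *\<^sub>R w \<in> U" using inU by blast+
              qed
              have lb: "\<bar>f a - f b\<bar> \<le> M * h" if "a \<in> U" "b \<in> U" "norm (a - b) \<le> h" for a b
              proof -
                have "\<bar>f a - f b\<bar> \<le> M * norm (a - b)" using lip that by blast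
                also have "\<dots> \<le> M * h" using that M by (intro mult_left_mono) auto
                finally show ?thesis .
              qed
              have aM: "\<bar>f (p + h *\<^sub>R w) - f p\<bar> \<le> M * h" by (rule lb[OF ppU(1) pU]) (use nhw in simp)
              have bM: "\<bar>f (p - h *\<^sub>R w) - f p\<bar> \<le> M * h" by (rule lb[OF ppU(2) pU]) (use nhw in simp)
              have dpM: "\<bar>f (q + h *\<^sub>R w') - f q\<bar> \<le> M * h" by (rule lb[OF qpU(1) qU]) (use nhw' in simp)
              have dmM: "\<bar>f (q - h *\<^sub>R w') - f q\<bar> \<le> M * h" by (rule lb[OF qpU(2) qU]) (use nhw' in simp)
              have sM: "\<bar>\<sigma> XN\<bar> \<le> M" using \<sigma>b XNpos XNle r1 r12 by auto
              have sXN: "XN * \<sigma> XN = f q - f p" using XNpos by (simp add: \<sigma>_def q_def)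
              have sX: "X * \<sigma> X = f p' - f p" using Xpos by (simp add: \<sigma>_def p'_def)
              have pig': "\<sigma> XN - \<sigma> X \<le> 2 * M / K" using pig by (simp add: X_def XN_def)
              have gp: "(XN - c) * (f (p' + h *\<^sub>R w') - f p) \<le> (XN - X) * (f (p + h *\<^sub>R w) - f p)
                   + (X - c) * (XN * \<sigma> XN + (f (q + h *\<^sub>R w') - f q))"
                using aff[OF cvp, of "f p"] sXN by simp
              have gm: "(XN + c) * (f (p' - h *\<^sub>R w') - f p) \<le> (XN - X) * (f (p - h *\<^sub>R w) - f p)
                   + (X + c) * (XN * \<sigma> XN + (f (q - h *\<^sub>R w') - f q))"
                using aff[OF cvm, of "f p"] sXN by simp
              have k0': "(f (p + h *\<^sub>R w) - f p) + (f (p - h *\<^sub>R w) - f p) \<le> -2 * \<gamma> * h" using k0 by simp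
              have hK: "8 * M * X / (K * \<gamma>) \<le> h" using hh by (simp add: \<rho>1'_def)
              have "(f (p' + h *\<^sub>R w') - f p) + (f (p' - h *\<^sub>R w') - f p) - 2 * (X * \<sigma> X) \<le> - \<gamma> * h"
                by (rule alg[OF hpos Xpos XNeq B2 cb hX2 k0' aM bM dpM dmM sM pig' gp gm BM g M Kpos hK])
              thus ?thesis using sX by simp
            qed
          qed
          show False using R' cw' nw' r1'pos r12' sub' kk' unfolding kinkP_def by blast
        qed
      qed
    qed
  qed
qed



lemma sc_upper:
  fixes f :: "real^'n \<Rightarrow> real"
  assumes sc: "separately_convex f" and s: "s \<ge> 0"
  shows "\<exists>C. \<forall>y. (\<forall>i. \<bar>y$i - x$i\<bar> \<le> s) \<longrightarrow> f y \<le> C"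
proof -
  define corner :: "('n \<Rightarrow> bool) \<Rightarrow> real^'n" where "corner b = (\<chi> i. if b i then x$i + s else x$i - s)" for b
  define C where "C = (\<Sum>b\<in>UNIV. \<bar>f (corner b)\<bar>)"
  have cle: "f (corner b) \<le> C" for b
  proof -
    have "\<bar>f (corner b)\<bar> \<le> C" unfolding C_def by (rule member_le_sum) auto
    thus ?thesis by simp
  qed
  have main: "finite J \<Longrightarrow> \<forall>y. (\<forall>i\<in>J. \<bar>y$i - x$i\<bar> \<le> s) \<and> (\<forall>i. i \<notin> J \<longrightarrow> (y$i = x$i + s \<or> y$i = x$i - s)) \<longrightarrow> f y \<le> C" for J
  proof (induction J rule: finite_induct)
    case empty
    show ?case
    proof (intro allI impI)
      fix y :: "real^'n" assume "(\<forall>i\<in>{}. \<bar>y$i - x$i\<bar> \<le> s) \<and> (\<forall>i. i \<notin> {} \<longrightarrow> (y$i = x$i + s \<or> y$i = x$i - s))"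
      hence "y = corner (\<lambda>i. y$i = x$i + s)" by (auto simp: corner_def vec_eq_iff)
      hence "f y = f (corner (\<lambda>i. y$i = x$i + s))" by (rule arg_cong)
      thus "f y \<le> C" using cle[of "\<lambda>i. y$i = x$i + s"] by linarith
    qed
  next
    case (insert j J)
    show ?case
    proof (intro allI impI)
      fix y :: "real^'n"
      assume hy: "(\<forall>i\<in>insert j J. \<bar>y$i - x$i\<bar> \<le> s) \<and> (\<forall>i. i \<notin> insert j J \<longrightarrow> (y$i = x$i + s \<or> y$i = x$i - s))"
      define z where "z = y - (y$j) *\<^sub>R axis j 1"
      define \<psi> where "\<psi> t = f (z + t *\<^sub>R axis j 1)" for t
      have cv: "convex_on {x$j - s .. x$j + s} \<psi>"
        unfolding \<psi>_def by (rule convex_on_subset[OF line_cvx[OF sc]]) auto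
      have yj: "y$j \<in> {x$j - s .. x$j + s}" using hy by (auto simp: abs_le_iff)
      have m1: "\<psi> (y$j) \<le> max (\<psi> (x$j - s)) (\<psi> (x$j + s))" by (rule convex_on_le_max[OF cv yj])
      have m2: "\<psi> (y$j) = f y" by (simp add: \<psi>_def z_def)
      have m3: "\<psi> t \<le> C" if "t = x$j - s \<or> t = x$j + s" for t
      proof -
        have "(\<forall>i\<in>J. \<bar>(z + t *\<^sub>R axis j 1)$i - x$i\<bar> \<le> s) \<and>
              (\<forall>i. i \<notin> J \<longrightarrow> ((z + t *\<^sub>R axis j 1)$i = x$i + s \<or> (z + t *\<^sub>R axis j 1)$i = x$i - s))"
          using hy that insert.hyps by (auto simp: z_def axis_def)
        thus ?thesis using insert.IH unfolding \<psi>_def by blast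
      qed
      have "max (\<psi> (x$j - s)) (\<psi> (x$j + s)) \<le> C" using m3 by simp
      thus "f y \<le> C" using m1 m2 by linarith
    qed
  qed
  show ?thesis using main[of UNIV] by auto
qed

lemma midpt:
  fixes \<phi> :: "real \<Rightarrow> real"
  assumes "convex_on UNIV \<phi>"
  shows "2 * \<phi> ((a + b) / 2) \<le> \<phi> a + \<phi> b"
proof -
  have e: "(a + b) / 2 = (1 - 1/2) *\<^sub>R a + (1/2) *\<^sub>R b" by simp
  have "\<phi> ((a + b) / 2) \<le> (1 - 1/2) * \<phi> a + (1/2) * \<phi> b"
    unfolding e by (rule convex_onD[OF assms]) auto
  thus ?thesis by simp
qed

lemma sc_lower:
  fixes f :: "real^'n \<Rightarrow> real"
  assumes sc: "separately_convex f" and up: "\<forall>y. (\<forall>i. \<bar>y$i - x$i\<bar> \<le> s) \<longrightarrow> f y \<le> C"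
  shows "\<exists>D. \<forall>y. (\<forall>i. \<bar>y$i - x$i\<bar> \<le> s) \<longrightarrow> D \<le> f y"
proof -
  have main: "finite J \<Longrightarrow> \<exists>D. \<forall>y. (\<forall>i\<in>J. \<bar>y$i - x$i\<bar> \<le> s) \<and> (\<forall>i. i \<notin> J \<longrightarrow> y$i = x$i) \<longrightarrow> D \<le> f y" for J
  proof (induction J rule: finite_induct)
    case empty
    show ?case
    proof (intro exI allI impI)
      fix y :: "real^'n" assume "(\<forall>i\<in>{}. \<bar>y$i - x$i\<bar> \<le> s) \<and> (\<forall>i. i \<notin> {} \<longrightarrow> y$i = x$i)"
      hence "y = x" by (auto simp: vec_eq_iff)
      thus "f x \<le> f y" by simp
    qed
  next
    case (insert j J)
    obtain D where D: "\<forall>y. (\<forall>i\<in>J. \<bar>y$i - x$i\<bar> \<le> s) \<and> (\<forall>i. i \<notin> J \<longrightarrow> y$i = x$i) \<longrightarrow> D \<le> f y"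
      using insert.IH by blast
    show ?case
    proof (intro exI allI impI)
      fix y :: "real^'n"
      assume hy: "(\<forall>i\<in>insert j J. \<bar>y$i - x$i\<bar> \<le> s) \<and> (\<forall>i. i \<notin> insert j J \<longrightarrow> y$i = x$i)"
      define z where "z = y - (y$j) *\<^sub>R axis j 1"
      define \<psi> where "\<psi> t = f (z + t *\<^sub>R axis j 1)" for t
      have m0: "2 * \<psi> ((y$j + (2 * x$j - y$j)) / 2) \<le> \<psi> (y$j) + \<psi> (2 * x$j - y$j)"
        unfolding \<psi>_def by (rule midpt[OF line_cvx[OF sc]])
      have eq1: "(y$j + (2 * x$j - y$j)) / 2 = x$j" by simp
      have eq2: "\<psi> (y$j) = f y" by (simp add: \<psi>_def z_def)
      have "2 * \<psi> (x$j) \<le> f y + \<psi> (2 * x$j - y$j)" using m0 unfolding eq1 eq2 .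
      moreover have "D \<le> \<psi> (x$j)"
      proof -
        have "(\<forall>i\<in>J. \<bar>(z + x$j *\<^sub>R axis j 1)$i - x$i\<bar> \<le> s) \<and> (\<forall>i. i \<notin> J \<longrightarrow> (z + x$j *\<^sub>R axis j 1)$i = x$i)"
          using hy insert.hyps by (auto simp: z_def axis_def)
        thus ?thesis using D unfolding \<psi>_def by blast
      qed
      moreover have "\<psi> (2 * x$j - y$j) \<le> C"
      proof -
        have "\<forall>i. \<bar>(z + (2 * x$j - y$j) *\<^sub>R axis j 1)$i - x$i\<bar> \<le> s"
        proof
          fix i
          show "\<bar>(z + (2 * x$j - y$j) *\<^sub>R axis j 1)$i - x$i\<bar> \<le> s"
          proof (cases "i = j")
            case True thus ?thesis using hy by (simp add: z_def axis_def abs_le_iff)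
          next
            case False
            have hj: "\<bar>y$j - x$j\<bar> \<le> s" using hy by blast
            have s0: "0 \<le> s" by (rule order_trans[OF abs_ge_zero hj])
            have yi: "(z + (2 * x$j - y$j) *\<^sub>R axis j 1)$i = y$i" using False by (simp add: z_def axis_def)
            have "\<bar>y$i - x$i\<bar> \<le> s"
            proof (cases "i \<in> J")
              case True thus ?thesis using hy by blast
            next
              case F2: False
              hence "y$i = x$i" using hy False by blast
              thus ?thesis using s0 by simp
            qed
            thus ?thesis using yi by simp
          qed
        qed
        thus ?thesis using up unfolding \<psi>_def by blast
      qed
      ultimately show "2 * D - C \<le> f y" by linarith
    qed
  qed
  have "\<exists>D. \<forall>y. (\<forall>i\<in>UNIV. \<bar>y$i - x$i\<bar> \<le> s) \<and> (\<forall>i. i \<notin> UNIV \<longrightarrow> y$i = x$i) \<longrightarrow> D \<le> f y"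
    by (rule main) simp
  thus ?thesis by simp
qed



lemma half_le: "(1/2) * (a::real) \<le> b \<Longrightarrow> a \<le> 2 * b" by simp

lemma step_pos:
  fixes f :: "real^'n \<Rightarrow> real"
  assumes sc: "separately_convex f"
    and up: "\<forall>y. (\<forall>i. \<bar>y$i - x$i\<bar> \<le> 1) \<longrightarrow> f y \<le> C"
    and lo: "\<forall>y. (\<forall>i. \<bar>y$i - x$i\<bar> \<le> 1) \<longrightarrow> D \<le> f y"
    and hy: "\<forall>i. \<bar>y$i - x$i\<bar> \<le> 1/2" and ht: "\<bar>y$j + t - x$j\<bar> \<le> 1/2" and t: "t > 0"
  shows "\<bar>f (y + t *\<^sub>R axis j 1) - f y\<bar> \<le> 2 * (C - D) * t"
proof -
  define \<psi> where "\<psi> \<tau> = f (y + \<tau> *\<^sub>R axis j 1)" for \<tau>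
  have cv: "convex_on UNIV \<psi>" unfolding \<psi>_def by (rule line_cvx[OF sc])
  have inbox: "\<forall>i. \<bar>(y + \<tau> *\<^sub>R axis j 1)$i - x$i\<bar> \<le> 1" if "\<bar>y$j + \<tau> - x$j\<bar> \<le> 1" for \<tau>
  proof
    fix i show "\<bar>(y + \<tau> *\<^sub>R axis j 1)$i - x$i\<bar> \<le> 1"
    proof (cases "i = j")
      case True thus ?thesis using that by (simp add: axis_def)
    next
      case False
      have "\<bar>y$i - x$i\<bar> \<le> 1/2" using hy by blast
      thus ?thesis using False by (simp add: axis_def)
    qed
  qed
  have bC: "\<psi> \<tau> \<le> C" and bD: "D \<le> \<psi> \<tau>" if "\<bar>y$j + \<tau> - x$j\<bar> \<le> 1" for \<tau>
    using up lo inbox[OF that] unfolding \<psi>_def by blast+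
  have yj: "\<bar>y$j - x$j\<bar> \<le> 1/2" using hy by blast
  have b0: "D \<le> \<psi> 0" "\<psi> 0 \<le> C" using bC[of 0] bD[of 0] yj by auto
  have bt: "D \<le> \<psi> t" "\<psi> t \<le> C" using bC[of t] bD[of t] ht by auto
  have b2: "\<psi> (t + 1/2) \<le> C"
  proof -
    have "\<bar>y$j + (t + 1/2) - x$j\<bar> \<le> 1" using ht t unfolding abs_le_iff by linarith
    thus ?thesis by (rule bC)
  qed
  define nh where "nh = -(1/2::real)"
  have b1: "\<psi> nh \<le> C"
  proof -
    have "\<bar>y$j + nh - x$j\<bar> \<le> 1" using yj unfolding abs_le_iff nh_def by linarith
    thus ?thesis by (rule bC)
  qed
  have CD: "D \<le> C" using b0 by linarith
  have c1: "((t + 1/2) - 0) * \<psi> t \<le> ((t + 1/2) - t) * \<psi> 0 + (t - 0) * \<psi> (t + 1/2)"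
    by (rule cvx3[OF cv]) (use t in auto)
  have c2: "(t - nh) * \<psi> 0 \<le> (t - 0) * \<psi> nh + (0 - nh) * \<psi> t"
    by (rule cvx3[OF cv]) (use t in \<open>auto simp: nh_def\<close>)
  have p1: "t * \<psi> (t + 1/2) \<le> t * C" using b2 t by (intro mult_left_mono) auto
  have p2: "t * \<psi> nh \<le> t * C" using b1 t by (intro mult_left_mono) auto
  have p3: "t * D \<le> t * \<psi> 0" using b0 t by (intro mult_left_mono) auto
  have p4: "t * D \<le> t * \<psi> t" using bt t by (intro mult_left_mono) auto
  have c1': "t * \<psi> t + \<psi> t / 2 \<le> \<psi> 0 / 2 + t * \<psi> (t + 1/2)" using c1 by (simp add: algebra_simps)
  have c2': "t * \<psi> 0 + \<psi> 0 / 2 \<le> t * \<psi> nh + \<psi> t / 2" using c2 by (simp add: nh_def algebra_simps)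
  have upper: "\<psi> t / 2 - \<psi> 0 / 2 \<le> t * C - t * D" using c1' p1 p4 by linarith
  have lower: "\<psi> 0 / 2 - \<psi> t / 2 \<le> t * C - t * D" using c2' p2 p3 by linarith
  have "\<bar>\<psi> t - \<psi> 0\<bar> \<le> 2 * (t * C) - 2 * (t * D)" unfolding abs_le_iff using upper lower by linarith
  moreover have eqL: "2 * (C - D) * t = 2 * (t * C) - 2 * (t * D)" by (simp add: algebra_simps)
  ultimately show ?thesis unfolding \<psi>_def by simp
qed


lemma step_any:
  fixes f :: "real^'n \<Rightarrow> real"
  assumes sc: "separately_convex f"
    and up: "\<forall>y. (\<forall>i. \<bar>y$i - x$i\<bar> \<le> 1) \<longrightarrow> f y \<le> C"
    and lo: "\<forall>y. (\<forall>i. \<bar>y$i - x$i\<bar> \<le> 1) \<longrightarrow> D \<le> f y"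
    and hy: "\<forall>i. \<bar>y$i - x$i\<bar> \<le> 1/2" and ht: "\<bar>y$j + t - x$j\<bar> \<le> 1/2"
  shows "\<bar>f (y + t *\<^sub>R axis j 1) - f y\<bar> \<le> 2 * (C - D) * \<bar>t\<bar>"
proof (cases "t > 0")
  case True thus ?thesis using step_pos[OF sc up lo hy ht] by simp
next
  case False
  show ?thesis
  proof (cases "t = 0")
    case True thus ?thesis by simp
  next
    case False2: False
    hence tn: "-t > 0" using False by simp
    define y' where "y' = y + t *\<^sub>R axis j 1"
    have hy': "\<forall>i. \<bar>y'$i - x$i\<bar> \<le> 1/2"
    proof
      fix i show "\<bar>y'$i - x$i\<bar> \<le> 1/2"
        using hy ht by (cases "i = j") (auto simp: y'_def axis_def)
    qed
    have ht': "\<bar>y'$j + (-t) - x$j\<bar> \<le> 1/2" using hy by (simp add: y'_def)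
    have "\<bar>f (y' + (-t) *\<^sub>R axis j 1) - f y'\<bar> \<le> 2 * (C - D) * (-t)"
      by (rule step_pos[OF sc up lo hy' ht' tn])
    moreover have "y' + (-t) *\<^sub>R axis j 1 = y" by (simp add: y'_def)
    ultimately show ?thesis using tn by (simp add: y'_def abs_minus_commute)
  qed
qed

lemma path_bound:
  fixes f :: "real^'n \<Rightarrow> real"
  assumes st: "\<And>z j t. \<forall>i. \<bar>z$i - x$i\<bar> \<le> 1/2 \<Longrightarrow> \<bar>z$j + t - x$j\<bar> \<le> 1/2 \<Longrightarrow>
                  \<bar>f (z + t *\<^sub>R axis j 1) - f z\<bar> \<le> L * \<bar>t\<bar>"
    and hy: "\<forall>i. \<bar>y$i - x$i\<bar> \<le> 1/2" and hy': "\<forall>i. \<bar>y'$i - x$i\<bar> \<le> 1/2"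
  shows "finite J \<Longrightarrow> \<bar>f (\<chi> i. if i \<in> J then y'$i else y$i) - f y\<bar> \<le> L * (\<Sum>i\<in>J. \<bar>y'$i - y$i\<bar>)"
proof (induction J rule: finite_induct)
  case empty
  have "(\<chi> i. if i \<in> {} then y'$i else y$i) = y" by (simp add: vec_eq_iff)
  thus ?case by simp
next
  case (insert j J)
  define z where "z = (\<chi> i. if i \<in> J then y'$i else y$i)"
  have z_box: "\<forall>i. \<bar>z$i - x$i\<bar> \<le> 1/2" using hy hy' by (simp add: z_def)
  have zj: "z$j = y$j" using insert.hyps by (simp add: z_def)
  have eq: "(\<chi> i. if i \<in> insert j J then y'$i else y$i) = z + (y'$j - y$j) *\<^sub>R axis j 1"
    using insert.hyps by (auto simp: vec_eq_iff z_def axis_def)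
  have "\<bar>z$j + (y'$j - y$j) - x$j\<bar> \<le> 1/2" using hy' zj by simp
  hence s1: "\<bar>f (z + (y'$j - y$j) *\<^sub>R axis j 1) - f z\<bar> \<le> L * \<bar>y'$j - y$j\<bar>"
    by (rule st[OF z_box])
  have s2: "\<bar>f z - f y\<bar> \<le> L * (\<Sum>i\<in>J. \<bar>y'$i - y$i\<bar>)" using insert.IH by (simp add: z_def)
  have "(\<Sum>i\<in>insert j J. \<bar>y'$i - y$i\<bar>) = \<bar>y'$j - y$j\<bar> + (\<Sum>i\<in>J. \<bar>y'$i - y$i\<bar>)"
    using insert.hyps by simp
  hence "L * (\<Sum>i\<in>insert j J. \<bar>y'$i - y$i\<bar>) = L * \<bar>y'$j - y$j\<bar> + L * (\<Sum>i\<in>J. \<bar>y'$i - y$i\<bar>)"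
    by (simp add: algebra_simps)
  thus ?case unfolding eq using s1 s2 by linarith
qed

lemma sc_lip:
  fixes f :: "real^'n \<Rightarrow> real"
  assumes sc: "separately_convex f"
  shows "\<exists>r>0. \<exists>M>0. \<forall>y\<in>cball x r. \<forall>y'\<in>cball x r. \<bar>f y - f y'\<bar> \<le> M * norm (y - y')"
proof -
  obtain C where up: "\<forall>y. (\<forall>i. \<bar>y$i - x$i\<bar> \<le> 1) \<longrightarrow> f y \<le> C"
    using sc_upper[OF sc, of 1 x] by auto
  obtain D where lo: "\<forall>y. (\<forall>i. \<bar>y$i - x$i\<bar> \<le> 1) \<longrightarrow> D \<le> f y"
    using sc_lower[OF sc up] by auto
  have xb: "\<forall>i. \<bar>x$i - x$i\<bar> \<le> (1::real)" by simp
  have "f x \<le> C" "D \<le> f x" using up lo xb by blast+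
  hence CD: "D \<le> C" by linarith
  define L where "L = 2 * (C - D)"
  have L0: "L \<ge> 0" using CD by (simp add: L_def)
  define M where "M = L * real CARD('n) + 1"
  have M0: "M > 0" using L0 by (simp add: M_def add_nonneg_pos)
  have st: "\<And>z j t. \<forall>i. \<bar>z$i - x$i\<bar> \<le> 1/2 \<Longrightarrow> \<bar>z$j + t - x$j\<bar> \<le> 1/2 \<Longrightarrow>
                  \<bar>f (z + t *\<^sub>R axis j 1) - f z\<bar> \<le> L * \<bar>t\<bar>"
    unfolding L_def by (rule step_any[OF sc up lo])
  show ?thesis
  proof (intro exI conjI ballI)
    show "(1/2::real) > 0" by simp
    show "M > 0" by (rule M0)
    fix y y' assume yb: "y \<in> cball x (1/2)" and yb': "y' \<in> cball x (1/2)"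
    have box: "\<forall>i. \<bar>z$i - x$i\<bar> \<le> 1/2" if "z \<in> cball x (1/2)" for z
    proof
      fix i
      have "\<bar>(z - x)$i\<bar> \<le> norm (z - x)" by (rule component_le_norm_cart)
      thus "\<bar>z$i - x$i\<bar> \<le> 1/2" using that by (simp add: dist_norm norm_minus_commute)
    qed
    have b1: "\<bar>f (\<chi> i. if i \<in> UNIV then y$i else y'$i) - f y'\<bar> \<le> L * (\<Sum>i\<in>UNIV. \<bar>y$i - y'$i\<bar>)"
      by (rule path_bound[OF st box[OF yb'] box[OF yb]]) auto
    have b2: "(\<chi> i. if i \<in> UNIV then y$i else y'$i) = y" by (simp add: vec_eq_iff)
    have b3: "(\<Sum>i\<in>UNIV. \<bar>y$i - y'$i\<bar>) \<le> (\<Sum>i\<in>(UNIV::'n set). norm (y - y'))"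
    proof (rule sum_mono)
      fix i show "\<bar>y$i - y'$i\<bar> \<le> norm (y - y')" using component_le_norm_cart[of "y - y'" i] by simp
    qed
    have b4: "(\<Sum>i\<in>(UNIV::'n set). norm (y - y')) = real CARD('n) * norm (y - y')" by simp
    have "\<bar>f y - f y'\<bar> \<le> L * (\<Sum>i\<in>UNIV. \<bar>y$i - y'$i\<bar>)" using b1 unfolding b2 .
    also have "\<dots> \<le> L * (real CARD('n) * norm (y - y'))" using b3 L0 unfolding b4 by (rule mult_left_mono)
    also have "\<dots> \<le> M * norm (y - y')" by (simp add: M_def algebra_simps)
    finally show "\<bar>f y - f y'\<bar> \<le> M * norm (y - y')" .
  qed
qed



theorem proposition3p1:
  fixes f :: "real^'n \<Rightarrow> real" and x v :: "real^'n"
  assumes "separately_convex f"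
    and "norm v = 1"
  shows "upper_dir_deriv f x v \<ge> - upper_dir_deriv f x (- v)"
proof (rule ccontr)
  note sc = assms(1)
  define A where "A = upper_dir_deriv f x v"
  define B where "B = upper_dir_deriv f x (- v)"
  assume "\<not> ?thesis"
  hence AB: "A < - B" by (simp add: A_def B_def not_le)
  obtain r where r1: "A < ereal r" and r2: "ereal r < - B" using ereal_dense2[OF AB] by blast
  have "B < - ereal r" using r2 ereal_less_uminus_reorder by blast
  hence "B < ereal (- r)" by simp
  then obtain b where b1: "B < ereal b" and b2: "ereal b < ereal (- r)" using ereal_dense2 by blast
  have br: "b + r < 0" using b2 by simp
  have ev1: "eventually (\<lambda>t. ereal ((f (x + t *\<^sub>R v) - f x) / t) < ereal r) (at_right 0)"
    using Limsup_lessD[OF r1[unfolded A_def upper_dir_deriv_def]] .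
  have ev2: "eventually (\<lambda>t. ereal ((f (x + t *\<^sub>R (- v)) - f x) / t) < ereal b) (at_right 0)"
    using Limsup_lessD[OF b1[unfolded B_def upper_dir_deriv_def]] .
  obtain \<delta> where d0: "\<delta> > 0" and dd: "\<And>t. t > 0 \<Longrightarrow> t < \<delta> \<Longrightarrow>
      ereal ((f (x + t *\<^sub>R v) - f x) / t) < ereal r \<and> ereal ((f (x + t *\<^sub>R (- v)) - f x) / t) < ereal b"
    using eventually_conj[OF ev1 ev2] unfolding eventually_at_right_field by auto
  define \<gamma> where "\<gamma> = - (b + r) / 2"
  have g: "\<gamma> > 0" using br by (simp add: \<gamma>_def)
  have kink: "f (x + t *\<^sub>R v) + f (x - t *\<^sub>R v) - 2 * f x \<le> -2 * \<gamma> * t" if "t > 0" "t < \<delta>" for t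
  proof -
    have "(f (x + t *\<^sub>R v) - f x) / t < r" "(f (x + t *\<^sub>R (- v)) - f x) / t < b" using dd[OF that] by auto
    hence "f (x + t *\<^sub>R v) - f x < r * t" "f (x - t *\<^sub>R v) - f x < b * t" using that by (simp_all add: divide_less_eq)
    thus ?thesis by (simp add: \<gamma>_def algebra_simps)
  qed
  obtain r0 M where r0: "r0 > 0" and M: "M > 0"
    and lip: "\<forall>y\<in>cball x r0. \<forall>y'\<in>cball x r0. \<bar>f y - f y'\<bar> \<le> M * norm (y - y')"
    using sc_lip[OF sc, of x] by blast
  have lip': "\<And>y y'. y \<in> cball x r0 \<Longrightarrow> y' \<in> cball x r0 \<Longrightarrow> \<bar>f y - f y'\<bar> \<le> M * norm (y - y')"
    using lip by blast
  obtain R where R1: "R \<ge> 1" and R: "kinkP f (cball x r0) CARD('n) \<gamma> R"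
    using kink_main[OF sc M lip', where k="CARD('n)"] g by blast
  define \<rho>2 where "\<rho>2 = min (\<delta> / 2) (r0 / 2)"
  define \<rho>1 where "\<rho>1 = \<rho>2 / R"
  have r2pos: "\<rho>2 > 0" using d0 r0 by (simp add: \<rho>2_def)
  have r1pos: "\<rho>1 > 0" using r2pos R1 by (simp add: \<rho>1_def)
  have Rr: "R * \<rho>1 \<le> \<rho>2" using R1 by (simp add: \<rho>1_def)
  have card: "card {i. v$i \<noteq> 0} \<le> CARD('n)" by (rule card_mono) auto
  have nv: "norm v \<le> 1" using assms(2) by simp
  have sub: "cball x (2 * \<rho>2) \<subseteq> cball x r0" using r0 by (auto simp: \<rho>2_def)
  have kk: "\<forall>h. \<rho>1 \<le> h \<and> h \<le> \<rho>2 \<longrightarrow> f (x + h *\<^sub>R v) + f (x - h *\<^sub>R v) - 2 * f x \<le> -2 * \<gamma> * h"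
  proof (intro allI impI)
    fix h assume "\<rho>1 \<le> h \<and> h \<le> \<rho>2"
    moreover have "\<rho>2 < \<delta>" using d0 by (simp add: \<rho>2_def)
    ultimately show "f (x + h *\<^sub>R v) + f (x - h *\<^sub>R v) - 2 * f x \<le> -2 * \<gamma> * h"
      using kink r1pos by simp
  qed
  show False using R card nv r1pos Rr sub kk unfolding kinkP_def by blast
qed


end
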